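(* Let $X$ be a set with $|X|=n\ge2$ and let $g\in\Gamma_i(X)$ for some $i\ge1$. Then $|\Gamma(g)|=\frac{2^{2i-1}(3n-5)+4}{3}$ and $|\Gamma_{i+1}(X)|=\frac{4^{i-1}(3n-5)+2}{3}\,|\Gamma_i(X)|$.
   Context: Let $1$ be a symbol not in $X$. Elements of height $\ge 2$ are triples $g=(g^l,g^c,g^r)$; $\Gamma_0(X)=\{1\}$, $\Gamma_1(X)=X$, each $x\in X$ identified with the triple $(1,x,1)$ (so $x^l=x^r=1$); for $i\ge 2$, $\Gamma_i(X)$ is the set of triples $g\in\Gamma_{i-1}(X)\times\Gamma_{i-2}(X)\times\Gamma_{i-1}(X)$ with $g^l\neq g^r$ and $g^c\in\{(g^l)^l,(g^l)^r\}\cap\{(g^r)^l,(g^r)^r\}$; $\Gamma(X)=\bigcup_{i\ge0}\Gamma_i(X)$. For $g\in\Gamma(X)$, $\Gamma(g)=\{g_1\in\Gamma(X): g_1^l=g\text{ or }g_1^r=g\}$. *)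

theory Defs
  imports Complex_Main
begin

text \<open>Elements of Gamma(X): the symbol 1 (One), elements of X (Atom x, identified
with the triple (1,x,1)), and triples (l,c,r).\<close>
datatype 'a gam = One | Atom 'a | Tri "'a gam" "'a gam" "'a gam"

fun gl :: "'a gam \<Rightarrow> 'a gam" where
  "gl One = One"
| "gl (Atom x) = One"
| "gl (Tri l c r) = l"

fun gr :: "'a gam \<Rightarrow> 'a gam" where
  "gr One = One"
| "gr (Atom x) = One"
| "gr (Tri l c r) = r"

fun Gamma :: "'a set \<Rightarrow> nat \<Rightarrow> 'a gam set" where
  "Gamma X 0 = {One}"
| "Gamma X (Suc 0) = Atom ` X"
| "Gamma X (Suc (Suc i)) =
     {Tri l c r | l c r. l \<in> Gamma X (Suc i) \<and> c \<in> Gamma X i \<and> r \<in> Gamma X (Suc i)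
        \<and> l \<noteq> r \<and> c \<in> {gl l, gr l} \<inter> {gl r, gr r}}"

definition Gamma_all :: "'a set \<Rightarrow> 'a gam set" where
  "Gamma_all X = (\<Union>i. Gamma X i)"

definition Gamma_of :: "'a set \<Rightarrow> 'a gam \<Rightarrow> 'a gam set" where
  "Gamma_of X g = {g1 \<in> Gamma_all X. gl g1 = g \<or> gr g1 = g}"

end

theory Submission
  imports Defs
begin

fun ht :: "'a gam \<Rightarrow> nat" where
  "ht One = 0"
| "ht (Atom x) = 1"
| "ht (Tri l c r) = Suc (ht l)"

lemma ht_Gamma: "g \<in> Gamma X i \<Longrightarrow> ht g = i"
  by (induction X i arbitrary: g rule: Gamma.induct) auto

lemma fin_Gamma: "finite X \<Longrightarrow> finite (Gamma X i)"
proof (induction X i rule: Gamma.induct)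
  case (3 X i)
  have "Gamma X (Suc (Suc i)) \<subseteq> (\<lambda>(l,c,r). Tri l c r) ` (Gamma X (Suc i) \<times> Gamma X i \<times> Gamma X (Suc i))"
    by (auto simp: image_iff)
  moreover have "finite (Gamma X (Suc i) \<times> Gamma X i \<times> Gamma X (Suc i))"
    using 3 by auto
  ultimately show ?case by (meson finite_surj)
qed auto

lemma Gamma2_cases: "g \<in> Gamma X (Suc (Suc i)) \<Longrightarrow> \<exists>l c r. g = Tri l c r \<and> l \<in> Gamma X (Suc i)
   \<and> c \<in> Gamma X i \<and> r \<in> Gamma X (Suc i) \<and> l \<noteq> r \<and> c \<in> {gl l, gr l} \<and> c \<in> {gl r, gr r}"
  by auto

lemma Tri_Gamma2: "Tri l c r \<in> Gamma X (Suc (Suc i)) \<longleftrightarrow> (l \<in> Gamma X (Suc i)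
   \<and> c \<in> Gamma X i \<and> r \<in> Gamma X (Suc i) \<and> l \<noteq> r \<and> c \<in> {gl l, gr l} \<and> c \<in> {gl r, gr r})"
  by auto

definition LG :: "'a set \<Rightarrow> 'a gam \<Rightarrow> nat \<Rightarrow> 'a gam set" where
  "LG X g i = {g1 \<in> Gamma X (Suc (Suc i)). gl g1 = g}"

definition RG :: "'a set \<Rightarrow> 'a gam \<Rightarrow> nat \<Rightarrow> 'a gam set" where
  "RG X g i = {g1 \<in> Gamma X (Suc (Suc i)). gr g1 = g}"

lemma Gamma_of_eq:
  assumes "g \<in> Gamma X (Suc i)"
  shows "Gamma_of X g = LG X g i \<union> RG X g i"
proof -
  have hg: "ht g = Suc i" using assms ht_Gamma by blast
  have "g1 \<in> LG X g i \<union> RG X g i" if "g1 \<in> Gamma X j" "gl g1 = g \<or> gr g1 = g" for g1 j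
  proof (cases j)
    case 0 then show ?thesis using that hg by auto
  next
    case (Suc m)
    show ?thesis
    proof (cases m)
      case 0 then show ?thesis using that hg Suc by auto
    next
      case (Suc k)
      have "g1 \<in> Gamma X (Suc (Suc k))" using that \<open>j = Suc m\<close> Suc by simp
      then obtain l c r where "g1 = Tri l c r" "l \<in> Gamma X (Suc k)" "r \<in> Gamma X (Suc k)"
        using Gamma2_cases[of g1 X k] by blast
      then have "Suc k = Suc i" using that hg ht_Gamma[of l X] ht_Gamma[of r X] by auto
      then show ?thesis using that \<open>j = Suc m\<close> Suc by (auto simp: LG_def RG_def)
    qed
  qed
  then show ?thesis unfolding Gamma_of_def Gamma_all_def LG_def RG_def by blast
qed

lemma LG_RG_disj: "LG X g i \<inter> RG X g i = {}"
  unfolding LG_def RG_def by (auto dest!: Gamma2_cases)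

fun swp :: "'a gam \<Rightarrow> 'a gam" where
  "swp (Tri l c r) = Tri r c l"
| "swp x = x"

lemma card_RG: "card (RG X g i) = card (LG X g i)"
proof -
  have "bij_betw swp (LG X g i) (RG X g i)"
  proof (rule bij_betw_byWitness[where f' = swp])
    show "\<forall>a\<in>LG X g i. swp (swp a) = a" unfolding LG_def by (auto dest!: Gamma2_cases)
    show "\<forall>a\<in>RG X g i. swp (swp a) = a" unfolding RG_def by (auto dest!: Gamma2_cases)
    show "swp ` LG X g i \<subseteq> RG X g i" unfolding LG_def RG_def by (auto dest!: Gamma2_cases)
    show "swp ` RG X g i \<subseteq> LG X g i" unfolding LG_def RG_def by (auto dest!: Gamma2_cases)
  qed
  then show ?thesis by (metis bij_betw_same_card)
qed

lemma fin_LG: "finite X \<Longrightarrow> finite (LG X g i)"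
  unfolding LG_def by (rule finite_subset[OF _ fin_Gamma[of X "Suc (Suc i)"]]) auto

lemma card_Gamma_of:
  assumes "finite X" "g \<in> Gamma X (Suc i)"
  shows "card (Gamma_of X g) = 2 * card (LG X g i)"
proof -
  have "finite (RG X g i)" unfolding RG_def
    by (rule finite_subset[OF _ fin_Gamma[of X "Suc (Suc i)"]]) (auto simp: assms)
  then show ?thesis unfolding Gamma_of_eq[OF assms(2)]
    by (simp add: card_Un_disjoint[OF fin_LG[OF assms(1)] \<open>finite (RG X g i)\<close> LG_RG_disj] card_RG)
qed

lemma LG_img:
  assumes "g \<in> Gamma X (Suc i)"
  shows "LG X g i = (\<lambda>(c,r). Tri g c r) ` {(c,r). c \<in> Gamma X i \<and> r \<in> Gamma X (Suc i) \<and> g \<noteq> r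
      \<and> c \<in> {gl g, gr g} \<and> c \<in> {gl r, gr r}}"
  using assms unfolding LG_def by (auto dest!: Gamma2_cases simp: image_iff)

lemma card_LG_img:
  assumes "g \<in> Gamma X (Suc i)"
  shows "card (LG X g i) = card {(c,r). c \<in> Gamma X i \<and> r \<in> Gamma X (Suc i) \<and> g \<noteq> r
      \<and> c \<in> {gl g, gr g} \<and> c \<in> {gl r, gr r}}"
  unfolding LG_img[OF assms] by (rule card_image) (auto simp: inj_on_def)

lemma card_LG_0:
  assumes "finite X" "g \<in> Gamma X (Suc 0)"
  shows "card (LG X g 0) = card X - 1"
proof -
  obtain x where x: "x \<in> X" "g = Atom x" using assms by auto
  have "{(c,r). c \<in> Gamma X 0 \<and> r \<in> Gamma X (Suc 0) \<and> g \<noteq> r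
      \<and> c \<in> {gl g, gr g} \<and> c \<in> {gl r, gr r}} = {One} \<times> (Atom ` (X - {x}))"
    using x by auto
  moreover have "card (Atom ` (X - {x})) = card X - 1"
    using x assms by (simp add: card_image inj_on_def)
  ultimately show ?thesis using card_LG_img[OF assms(2)] by (simp add: card_cartesian_product)
qed

lemma card_LG_Suc:
  assumes "finite X" "g \<in> Gamma X (Suc (Suc k))"
  obtains a d where "a \<in> Gamma X (Suc k)" "d \<in> Gamma X (Suc k)"
    "card (LG X g (Suc k)) = (card (Gamma_of X a) - 1) + (card (Gamma_of X d) - 1)"
    "card (Gamma_of X a) \<ge> 1" "card (Gamma_of X d) \<ge> 1"
proof -
  obtain a b d where g: "g = Tri a b d" "a \<in> Gamma X (Suc k)" "d \<in> Gamma X (Suc k)" "a \<noteq> d"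
    using Gamma2_cases[OF assms(2)] by blast
  have ga: "Gamma_of X a = {r \<in> Gamma X (Suc (Suc k)). gl r = a \<or> gr r = a}"
    using Gamma_of_eq[OF g(2)] unfolding LG_def RG_def by auto
  have gd: "Gamma_of X d = {r \<in> Gamma X (Suc (Suc k)). gl r = d \<or> gr r = d}"
    using Gamma_of_eq[OF g(3)] unfolding LG_def RG_def by auto
  have eq: "{(c,r). c \<in> Gamma X (Suc k) \<and> r \<in> Gamma X (Suc (Suc k)) \<and> g \<noteq> r
      \<and> c \<in> {gl g, gr g} \<and> c \<in> {gl r, gr r}} = {a} \<times> (Gamma_of X a - {g}) \<union> {d} \<times> (Gamma_of X d - {g})"
    unfolding ga gd using g by auto
  have fa: "finite (Gamma_of X a)" unfolding ga
    by (rule finite_subset[OF _ fin_Gamma[of X "Suc (Suc k)"]]) (auto simp: assms)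
  have fd: "finite (Gamma_of X d)" unfolding gd
    by (rule finite_subset[OF _ fin_Gamma[of X "Suc (Suc k)"]]) (auto simp: assms)
  have ia: "g \<in> Gamma_of X a" unfolding ga using g assms by auto
  have id: "g \<in> Gamma_of X d" unfolding gd using g assms by auto
  have "card (LG X g (Suc k)) = card ({a} \<times> (Gamma_of X a - {g}) \<union> {d} \<times> (Gamma_of X d - {g}))"
    using card_LG_img[OF assms(2)] eq by simp
  also have "\<dots> = card ({a} \<times> (Gamma_of X a - {g})) + card ({d} \<times> (Gamma_of X d - {g}))"
    by (rule card_Un_disjoint) (use fa fd g(4) in auto)
  also have "\<dots> = (card (Gamma_of X a) - 1) + (card (Gamma_of X d) - 1)"
    by (simp add: card_cartesian_product ia id)
  finally have c: "card (LG X g (Suc k)) = (card (Gamma_of X a) - 1) + (card (Gamma_of X d) - 1)" .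
  have "card (Gamma_of X a) \<ge> 1" "card (Gamma_of X d) \<ge> 1"
    using fa fd ia id by (auto simp: Suc_le_eq card_gt_0_iff)
  then show ?thesis using that g c by blast
qed

lemma card_LG_formula:
  assumes "finite X" "card X = n" "n \<ge> 2"
  shows "\<forall>g \<in> Gamma X (Suc k). real (card (LG X g k)) = (4 ^ k * (3 * real n - 5) + 2) / 3"
proof (induction k)
  case 0
  then show ?case using card_LG_0[OF assms(1)] assms by (auto simp: of_nat_diff)
next
  case (Suc k)
  show ?case
  proof
    fix g assume g: "g \<in> Gamma X (Suc (Suc k))"
    obtain a d where ad: "a \<in> Gamma X (Suc k)" "d \<in> Gamma X (Suc k)"
      "card (LG X g (Suc k)) = (card (Gamma_of X a) - 1) + (card (Gamma_of X d) - 1)"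
      "card (Gamma_of X a) \<ge> 1" "card (Gamma_of X d) \<ge> 1"
      using card_LG_Suc[OF assms(1) g] by blast
    have "real (card (LG X g (Suc k))) = 2 * real (card (LG X a k)) - 1 + (2 * real (card (LG X d k)) - 1)"
      using ad card_Gamma_of[OF assms(1)] by (simp add: of_nat_diff)
    also have "\<dots> = (4 ^ Suc k * (3 * real n - 5) + 2) / 3"
    proof -
      have A: "real (card (LG X a k)) = (4 ^ k * (3 * real n - 5) + 2) / 3" using Suc.IH ad(1) by blast
      have D: "real (card (LG X d k)) = (4 ^ k * (3 * real n - 5) + 2) / 3" using Suc.IH ad(2) by blast
      show ?thesis unfolding A D by (simp add: field_simps)
    qed
    finally show "real (card (LG X g (Suc k))) = (4 ^ Suc k * (3 * real n - 5) + 2) / 3" .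
  qed
qed

lemma Gamma_UN:
  "Gamma X (Suc (Suc k)) = (\<Union>g\<in>Gamma X (Suc k). LG X g k)"
  unfolding LG_def by (auto dest!: Gamma2_cases)

theorem lemma6p1:
  fixes X :: "'a set" and n i :: nat and g :: "'a gam"
  assumes "finite X" and "card X = n" and "n \<ge> 2"
    and "i \<ge> 1" and "g \<in> Gamma X i"
  shows "real (card (Gamma_of X g)) = (2 ^ (2 * i - 1) * (3 * real n - 5) + 4) / 3
    \<and> real (card (Gamma X (i + 1))) =
           ((4 ^ (i - 1) * (3 * real n - 5) + 2) / 3) * real (card (Gamma X i))"
proof -
  obtain k where k: "i = Suc k" using assms(4) by (cases i) auto
  note F = card_LG_formula[OF assms(1-3), of k]
  have p: "(2::real) ^ (2 * i - 1) = 2 * 4 ^ k"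
    by (simp add: k power_mult)
  have 1: "real (card (Gamma_of X g)) = (2 ^ (2 * i - 1) * (3 * real n - 5) + 4) / 3"
  proof -
    have "real (card (LG X g k)) = (4 ^ k * (3 * real n - 5) + 2) / 3" using F assms(5) k by simp
    then show ?thesis using card_Gamma_of[OF assms(1)] assms(5) k p by (simp add: field_simps)
  qed
  have "card (Gamma X (Suc (Suc k))) = (\<Sum>g\<in>Gamma X (Suc k). card (LG X g k))"
    unfolding Gamma_UN
    by (rule card_UN_disjoint) (auto simp: fin_Gamma fin_LG assms(1), auto simp: LG_def)
  then have "real (card (Gamma X (Suc (Suc k)))) = (\<Sum>g\<in>Gamma X (Suc k). real (card (LG X g k)))"
    by simp
  also have "\<dots> = (\<Sum>g\<in>Gamma X (Suc k). (4 ^ k * (3 * real n - 5) + 2) / 3)"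
    using F by (intro sum.cong) auto
  finally have 2: "real (card (Gamma X (i + 1))) =
           ((4 ^ (i - 1) * (3 * real n - 5) + 2) / 3) * real (card (Gamma X i))"
    using k by (simp add: mult.commute)
  show ?thesis using 1 2 by blast
qed

end
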